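(* Let $\ell_1,\ell_2$ be two distinct intersecting lines in $\mathbb{R}^2$ given by $L_i=0$, where $L_i=A_ix+B_iy+C_i$ (real coefficients), $i=1,2$. For a real constant $C$, let $f(x,y)=L_1^2L_2+L_1+C$ and let $\Gamma$ be the real algebraic curve $f(x,y)=0$. Then $\Gamma$ is asymptotic to the lines $\ell_1$ and $\ell_2$. Moreover, if $C\neq0$, then $f$ is an irreducible bivariate polynomial. *)

theory Defs
  imports "HOL-Analysis.Analysis" "HOL-Computational_Algebra.Polynomial"
begin

text \<open>Bivariate real polynomials are represented as elements of R[x][y], i.e. the type
  real poly poly: a polynomial in y whose coefficients are polynomials in x.
  Irreducibility in R[x][y] coincides with irreducibility in R[x,y].\<close>

definition eval2 :: "real poly poly \<Rightarrow> real \<Rightarrow> real \<Rightarrow> real" where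
  "eval2 f x y = poly (map_poly (\<lambda>p. poly p x) f) y"

text \<open>The linear polynomial a x + b y + c.\<close>
definition linpoly :: "real \<Rightarrow> real \<Rightarrow> real \<Rightarrow> real poly poly" where
  "linpoly a b c = [:[:c, a:], [:b:]:]"

definition zero_set :: "real poly poly \<Rightarrow> (real \<times> real) set" where
  "zero_set f = {(x, y). eval2 f x y = 0}"

definition line :: "real \<Rightarrow> real \<Rightarrow> real \<Rightarrow> (real \<times> real) set" where
  "line a b c = {(x, y). a * x + b * y + c = 0}"

definition asymptotic_to :: "(real \<times> real) set \<Rightarrow> (real \<times> real) set \<Rightarrow> bool" where
  "asymptotic_to \<Gamma> L \<longleftrightarrow>
     (\<exists>\<gamma> :: real \<Rightarrow> real \<times> real.
        continuous_on {0..} \<gamma> \<and> (\<forall>t\<ge>0. \<gamma> t \<in> \<Gamma>) \<and>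
        filterlim (\<lambda>t. norm (\<gamma> t)) at_top at_top \<and>
        ((\<lambda>t. infdist (\<gamma> t) L) \<longlongrightarrow> 0) at_top)"

end

theory Submission
  imports Defs
begin


lemma eval2_alt: "eval2 f x y = poly (poly f [:y:]) x"
  unfolding eval2_def
  by (induction f) (simp_all add: map_poly_pCons)

lemma eval2_add[simp]: "eval2 (p + q) x y = eval2 p x y + eval2 q x y"
  by (simp add: eval2_alt)
lemma eval2_mult[simp]: "eval2 (p * q) x y = eval2 p x y * eval2 q x y"
  by (simp add: eval2_alt)
lemma eval2_power[simp]: "eval2 (p ^ n) x y = eval2 p x y ^ n"
  by (simp add: eval2_alt poly_power)
lemma eval2_const[simp]: "eval2 [:[:c:]:] x y = c"
  by (simp add: eval2_alt)
lemma eval2_linpoly[simp]: "eval2 (linpoly a b c) x y = a * x + b * y + c"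
  by (simp add: eval2_alt linpoly_def algebra_simps)

lemma eval2_inj:
  assumes "\<And>x y. eval2 p x y = eval2 q x y"
  shows "p = q"
proof (rule poly_eqI)
  fix i
  have "\<And>x. poly (coeff p i) x = poly (coeff q i) x"
  proof -
    fix x
    have "poly (map_poly (\<lambda>c. poly c x) p) = poly (map_poly (\<lambda>c. poly c x) q)"
      using assms unfolding eval2_def by auto
    hence "map_poly (\<lambda>c. poly c x) p = map_poly (\<lambda>c. poly c x) q"
      by (simp add: poly_eq_poly_eq_iff)
    hence "coeff (map_poly (\<lambda>c. poly c x) p) i = coeff (map_poly (\<lambda>c. poly c x) q) i" by simp
    thus "poly (coeff p i) x = poly (coeff q i) x" by (simp add: coeff_map_poly)
  qed
  hence "poly (coeff p i) = poly (coeff q i)" by auto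
  thus "coeff p i = coeff q i" by (simp add: poly_eq_poly_eq_iff)
qed

definition repr :: "(real \<Rightarrow> real \<Rightarrow> real) \<Rightarrow> bool" where
  "repr F \<longleftrightarrow> (\<exists>p. \<forall>x y. eval2 p x y = F x y)"

lemma repr_const: "repr (\<lambda>x y. c)"
  unfolding repr_def by (rule exI[of _ "[:[:c:]:]"]) simp
lemma repr_lin: "repr (\<lambda>x y. a * x + b * y + c)"
  unfolding repr_def by (rule exI[of _ "linpoly a b c"]) simp
lemma repr_add: "repr F \<Longrightarrow> repr G \<Longrightarrow> repr (\<lambda>x y. F x y + G x y)"
  unfolding repr_def by (metis eval2_add)
lemma repr_mult: "repr F \<Longrightarrow> repr G \<Longrightarrow> repr (\<lambda>x y. F x y * G x y)"
  unfolding repr_def by (metis eval2_mult)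

lemma repr_inner: "repr P \<Longrightarrow> repr (\<lambda>x y. poly c (P x y))"
proof (induction c)
  case 0 then show ?case using repr_const[of 0] by simp
next
  case (pCons a c)
  then show ?case using repr_add[OF repr_const[of a] repr_mult[OF pCons(3) pCons(2)[OF pCons(3)]]]
    by simp
qed

lemma repr_comp: "repr P \<Longrightarrow> repr Q \<Longrightarrow> repr (\<lambda>x y. eval2 p (P x y) (Q x y))"
proof (induction p)
  case 0 then show ?case using repr_const[of 0] by (simp add: eval2_def)
next
  case (pCons a p)
  have e: "eval2 (pCons a p) u v = poly a u + v * eval2 p u v" for u v
    by (simp add: eval2_alt)
  show ?case unfolding e
    by (rule repr_add[OF repr_inner[OF pCons(3)] repr_mult[OF pCons(4) pCons(2)[OF pCons(3,4)]]])
qed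



lemma unit_pp: "is_unit (a :: real poly poly) \<longleftrightarrow> (\<exists>r. r \<noteq> 0 \<and> a = [:[:r:]:])"
  by (auto simp: is_unit_poly_iff is_unit_const_poly_iff dvd_field_iff)

lemma dvd_lin_coprime:
  fixes b0 :: "real poly"
  assumes "b0 dvd [:C,1:]" "b0 dvd [:0,0,1:]" "C \<noteq> 0"
  shows "is_unit b0"
proof -
  have nz: "b0 \<noteq> 0" using assms(1) by auto
  have "degree b0 \<le> 1" using dvd_imp_degree_le[OF assms(1)] by simp
  moreover have "degree b0 \<noteq> 1"
  proof
    assume d: "degree b0 = 1"
    define p where "p = coeff b0 0"
    define q where "q = coeff b0 1"
    have q: "q \<noteq> 0" using d nz unfolding q_def by (metis leading_coeff_0_iff)
    have b: "b0 = [:p,q:]"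
    proof (rule poly_eqI)
      fix n show "coeff b0 n = coeff [:p,q:] n"
        using coeff_eq_0[of b0 n] d by (cases n) (auto simp: p_def q_def coeff_pCons split: nat.splits)
    qed
    define r where "r = - p / q"
    have "poly b0 r = 0" using q by (simp add: b r_def)
    moreover obtain k where "[:C,1:] = b0 * k" using assms(1) by (auto simp: dvd_def)
    moreover obtain k' where "[:0,0,1:] = b0 * k'" using assms(2) by (auto simp: dvd_def)
    ultimately have "poly [:C,1:] r = 0" "poly [:0,0,1:] r = 0" by simp_all
    thus False using assms(3) by simp
  qed
  ultimately have "degree b0 = 0" by simp
  thus ?thesis using nz by (simp add: is_unit_iff_degree)
qed

lemma g_irred:
  assumes "C \<noteq> 0"
  shows "irreducible ([:[:C,1:], [:0,0,1:]:] :: real poly poly)" (is "irreducible ?g")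
proof (rule irreducibleI)
  show "?g \<noteq> 0" by simp
  show "\<not> is_unit ?g" by (simp add: unit_pp)
  fix a b assume g: "?g = a * b"
  have a0: "a \<noteq> 0" and b0: "b \<noteq> 0" using g by auto
  have "degree a + degree b = 1" proof -
    have "degree ?g = 1" by simp
    thus ?thesis using degree_mult_eq[OF a0 b0] g by simp
  qed
  hence "degree a = 0 \<or> degree b = 0" by auto
  moreover have "is_unit c" if c: "degree c = 0" and gg: "?g = d * c" for c d :: "real poly poly"
  proof -
    obtain c0 where c0: "c = [:c0:]" using c by (metis degree_eq_zeroE)
    have "?g = smult c0 d" using gg c0 by simp
    hence "coeff ?g 0 = c0 * coeff d 0" "coeff ?g 1 = c0 * coeff d 1" by (auto simp: mult.commute)
    hence "c0 dvd [:C,1:]" "c0 dvd [:0,0,1:]" by auto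
    hence "is_unit c0" using dvd_lin_coprime assms by blast
    thus ?thesis using c0 by (simp add: is_unit_const_poly_iff)
  qed
  ultimately show "is_unit a \<or> is_unit b" using g by (metis mult.commute)
qed



lemma det_nz:
  fixes A1 B1 C1 A2 B2 C2 :: real
  assumes "(A1, B1) \<noteq> (0, 0)" and "(A2, B2) \<noteq> (0, 0)"
    and "line A1 B1 C1 \<noteq> line A2 B2 C2"
    and "line A1 B1 C1 \<inter> line A2 B2 C2 \<noteq> {}"
  shows "A1 * B2 - A2 * B1 \<noteq> 0"
proof
  assume D: "A1 * B2 - A2 * B1 = 0"
  have "\<exists>k. k \<noteq> 0 \<and> A2 = k * A1 \<and> B2 = k * B1"
  proof (cases "A1 = 0")
    case True
    hence "B1 \<noteq> 0" using assms(1) by auto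
    moreover have "A2 = 0" using D True \<open>B1 \<noteq> 0\<close> by simp
    ultimately show ?thesis using assms(2) True by (intro exI[of _ "B2 / B1"]) simp
  next
    case False
    have "B2 = A2 / A1 * B1" using D False by (simp add: field_simps)
    moreover have "A2 \<noteq> 0" using assms(2) calculation by auto
    ultimately show ?thesis using False by (intro exI[of _ "A2 / A1"]) auto
  qed
  then obtain k where k: "k \<noteq> 0" "A2 = k * A1" "B2 = k * B1" by blast
  obtain p q where pq: "A1 * p + B1 * q + C1 = 0" "A2 * p + B2 * q + C2 = 0"
    using assms(4) unfolding line_def by auto
  have C2: "C2 = k * C1" using pq k
  proof -
    have e1: "C2 = -(A2*p + B2*q)" and e2: "C1 = -(A1*p+B1*q)" using pq by linarith+
    have "C2 = -(k*(A1*p+B1*q))" unfolding e1 k(2,3) by (simp only: distrib_left mult.assoc)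
    thus ?thesis unfolding e2 by (simp add: algebra_simps)
  qed
  have "line A1 B1 C1 = line A2 B2 C2"
    unfolding line_def using k C2
    by (auto simp: distrib_left[symmetric] mult.assoc)
  thus False using assms(3) by simp
qed

lemma infdist_line:
  assumes "(A, B) \<noteq> (0::real, 0::real)"
  shows "\<exists>K\<ge>0. \<forall>x y. infdist (x, y) (line A B C0) \<le> K * \<bar>A * x + B * y + C0\<bar>"
proof (cases "A = 0")
  case True
  hence B: "B \<noteq> 0" using assms by auto
  show ?thesis
  proof (intro exI[of _ "1 / \<bar>B\<bar>"] conjI allI)
    fix x y
    have "(x, y - (A * x + B * y + C0) / B) \<in> line A B C0"
      using True B by (simp add: line_def field_simps)
    hence "infdist (x, y) (line A B C0) \<le> dist (x, y) (x, y - (A * x + B * y + C0) / B)"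
      by (rule infdist_le)
    also have "\<dots> = 1 / \<bar>B\<bar> * \<bar>A * x + B * y + C0\<bar>"
      by (simp add: dist_Pair_Pair dist_real_def abs_divide)
    finally show "infdist (x, y) (line A B C0) \<le> 1 / \<bar>B\<bar> * \<bar>A * x + B * y + C0\<bar>" .
  qed simp
next
  case False
  show ?thesis
  proof (intro exI[of _ "1 / \<bar>A\<bar>"] conjI allI)
    fix x y
    have "(x - (A * x + B * y + C0) / A, y) \<in> line A B C0"
      using False by (simp add: line_def field_simps)
    hence "infdist (x, y) (line A B C0) \<le> dist (x, y) (x - (A * x + B * y + C0) / A, y)"
      by (rule infdist_le)
    also have "\<dots> = 1 / \<bar>A\<bar> * \<bar>A * x + B * y + C0\<bar>"
      by (simp add: dist_Pair_Pair dist_real_def abs_divide)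
    finally show "infdist (x, y) (line A B C0) \<le> 1 / \<bar>A\<bar> * \<bar>A * x + B * y + C0\<bar>" .
  qed simp
qed

lemma lin_bound: "\<bar>A * fst p + B * snd p + C0\<bar> \<le> (\<bar>A\<bar> + \<bar>B\<bar>) * norm p + \<bar>C0\<bar>"
  for p :: "real \<times> real"
proof -
  have "\<bar>fst p\<bar> \<le> norm p" "\<bar>snd p\<bar> \<le> norm p"
    using norm_fst_le[of "fst p" "snd p"] norm_snd_le[of "snd p" "fst p"] by auto
  hence "\<bar>A * fst p\<bar> \<le> \<bar>A\<bar> * norm p" "\<bar>B * snd p\<bar> \<le> \<bar>B\<bar> * norm p"
    by (auto simp: abs_mult intro: mult_left_mono)
  thus ?thesis by (simp add: distrib_right)
qed

lemma norm_at_top: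
  fixes \<gamma> :: "real \<Rightarrow> real \<times> real"
  assumes ev: "\<forall>\<^sub>F t in at_top. t \<le> \<bar>A * fst (\<gamma> t) + B * snd (\<gamma> t) + C0\<bar>"
  shows "filterlim (\<lambda>t. norm (\<gamma> t)) at_top at_top"
proof (subst filterlim_at_top, intro allI)
  fix Z :: real
  define K where "K = \<bar>A\<bar> + \<bar>B\<bar> + 1"
  have K: "K > 0" unfolding K_def by simp
  have "\<forall>\<^sub>F t in at_top. \<bar>Z\<bar> * K + \<bar>C0\<bar> \<le> t" by (rule eventually_ge_at_top)
  with ev show "\<forall>\<^sub>F t in at_top. Z \<le> norm (\<gamma> t)"
  proof eventually_elim
    case (elim t)
    have "\<bar>Z\<bar> * K \<le> (\<bar>A\<bar> + \<bar>B\<bar>) * norm (\<gamma> t)"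
      using lin_bound[of A "\<gamma> t" B C0] elim by linarith
    also have "\<dots> \<le> K * norm (\<gamma> t)" unfolding K_def
      by (intro mult_right_mono) auto
    finally have "\<bar>Z\<bar> \<le> norm (\<gamma> t)" using K by (simp add: mult.commute)
    thus ?case by simp
  qed
qed



lemma asym_gen:
  fixes \<gamma> :: "real \<Rightarrow> real \<times> real"
  assumes "continuous_on {0..} \<gamma>" "\<forall>t\<ge>0. \<gamma> t \<in> \<Gamma>" "(A, B) \<noteq> (0, 0)"
    and "\<And>t. A * fst (\<gamma> t) + B * snd (\<gamma> t) + C0 = W t" "(W \<longlongrightarrow> 0) at_top"
    and "\<forall>\<^sub>F t in at_top. t \<le> \<bar>A' * fst (\<gamma> t) + B' * snd (\<gamma> t) + C0'\<bar>"
  shows "asymptotic_to \<Gamma> (line A B C0)"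
  unfolding asymptotic_to_def
proof (intro exI[of _ \<gamma>] conjI)
  show "filterlim (\<lambda>t. norm (\<gamma> t)) at_top at_top" by (rule norm_at_top[OF assms(6)])
  obtain K where K: "K \<ge> 0" "\<And>x y. infdist (x, y) (line A B C0) \<le> K * \<bar>A * x + B * y + C0\<bar>"
    using infdist_line[OF assms(3)] by blast
  have le: "infdist (\<gamma> t) (line A B C0) \<le> K * \<bar>W t\<bar>" for t
    using K(2)[of "fst (\<gamma> t)" "snd (\<gamma> t)"] assms(4)[of t] by simp
  have "((\<lambda>t. K * \<bar>W t\<bar>) \<longlongrightarrow> K * \<bar>0\<bar>) at_top"
    by (intro tendsto_intros assms(5))
  hence lim: "((\<lambda>t. K * \<bar>W t\<bar>) \<longlongrightarrow> 0) at_top" by simp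
  show "((\<lambda>t. infdist (\<gamma> t) (line A B C0)) \<longlongrightarrow> 0) at_top"
    by (rule tendsto_sandwich[OF _ _ tendsto_const lim]) (auto simp: le infdist_nonneg)
qed (use assms in auto)



lemma lim_inv: "((\<lambda>t::real. 1 / (t + 1)) \<longlongrightarrow> 0) at_top"
proof -
  have "filterlim (\<lambda>t::real. 1 + t) at_top at_top"
    by (rule filterlim_tendsto_add_at_top[OF tendsto_const filterlim_ident])
  hence "((\<lambda>t::real. inverse (1 + t)) \<longlongrightarrow> 0) at_top"
    by (rule tendsto_inverse_0_at_top)
  thus ?thesis by (simp add: inverse_eq_divide add.commute)
qed

theorem lemma5:
  fixes A1 B1 C1 A2 B2 C2 C :: real
  assumes "(A1, B1) \<noteq> (0, 0)" and "(A2, B2) \<noteq> (0, 0)"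
    and "line A1 B1 C1 \<noteq> line A2 B2 C2"
    and "line A1 B1 C1 \<inter> line A2 B2 C2 \<noteq> {}"
  defines "f \<equiv> (linpoly A1 B1 C1)\<^sup>2 * linpoly A2 B2 C2 + linpoly A1 B1 C1 + [:[:C:]:]"
  shows "asymptotic_to (zero_set f) (line A1 B1 C1) \<and>
         asymptotic_to (zero_set f) (line A2 B2 C2) \<and>
         (C \<noteq> 0 \<longrightarrow> irreducible f)"
proof -
  define D where "D = A1 * B2 - A2 * B1"
  have D: "D \<noteq> 0" unfolding D_def by (rule det_nz[OF assms(1-4)])
  define phi where "phi u v = (((u - C1) * B2 - (v - C2) * B1) / D, (A1 * (v - C2) - A2 * (u - C1)) / D)" for u v
  have L1phi: "A1 * fst (phi u v) + B1 * snd (phi u v) + C1 = u" for u v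
  proof -
    have "A1 * fst (phi u v) + B1 * snd (phi u v) = (A1 * ((u - C1) * B2 - (v - C2) * B1) + B1 * (A1 * (v - C2) - A2 * (u - C1))) / D"
      by (simp add: phi_def add_divide_distrib)
    also have "A1 * ((u - C1) * B2 - (v - C2) * B1) + B1 * (A1 * (v - C2) - A2 * (u - C1)) = (u - C1) * D"
      unfolding D_def by (simp add: algebra_simps)
    finally show ?thesis using D by simp
  qed
  have L2phi: "A2 * fst (phi u v) + B2 * snd (phi u v) + C2 = v" for u v
  proof -
    have "A2 * fst (phi u v) + B2 * snd (phi u v) = (A2 * ((u - C1) * B2 - (v - C2) * B1) + B2 * (A1 * (v - C2) - A2 * (u - C1))) / D"
      by (simp add: phi_def add_divide_distrib)
    also have "A2 * ((u - C1) * B2 - (v - C2) * B1) + B2 * (A1 * (v - C2) - A2 * (u - C1)) = (v - C2) * D"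
      unfolding D_def by (simp add: algebra_simps)
    finally show ?thesis using D by simp
  qed
  have phiL: "phi (A1 * x + B1 * y + C1) (A2 * x + B2 * y + C2) = (x, y)" for x y
  proof -
    have "((A1 * x + B1 * y + C1 - C1) * B2 - (A2 * x + B2 * y + C2 - C2) * B1) = x * D"
      unfolding D_def by (simp add: algebra_simps)
    moreover have "(A1 * (A2 * x + B2 * y + C2 - C2) - A2 * (A1 * x + B1 * y + C1 - C1)) = y * D"
      unfolding D_def by (simp add: algebra_simps)
    ultimately show ?thesis using D unfolding phi_def by simp
  qed
  have evf: "eval2 f x y = (A1 * x + B1 * y + C1)^2 * (A2 * x + B2 * y + C2) + (A1 * x + B1 * y + C1) + C" for x y
    unfolding f_def by simp
  have evfphi: "eval2 f (fst (phi u v)) (snd (phi u v)) = u^2 * v + u + C" for u v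
    unfolding evf L1phi L2phi ..
  have zs: "phi u v \<in> zero_set f" if "u^2 * v + u + C = 0" for u v
    using evfphi[of u v] that unfolding zero_set_def by (cases "phi u v") auto
  have contphi: "continuous_on S (\<lambda>t. phi (U t) (V t))" if "continuous_on S U" "continuous_on S V" for S U V
    unfolding phi_def using D by (intro continuous_intros that) auto
  have as1: "asymptotic_to (zero_set f) (line A1 B1 C1)"
  proof (rule asym_gen[where \<gamma> = "\<lambda>t. phi (1 / (t + 1)) (- (t + 1) - C * (t + 1)^2)"
        and W = "\<lambda>t. 1 / (t + 1)" and A' = A2 and B' = B2 and C0' = C2])
    show "continuous_on {0..} (\<lambda>t. phi (1 / (t + 1)) (- (t + 1) - C * (t + 1)^2))"
      by (intro contphi continuous_intros) auto
    show "\<forall>t\<ge>0. phi (1 / (t + 1)) (- (t + 1) - C * (t + 1)^2) \<in> zero_set f"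
    proof (intro allI impI zs)
      fix t :: real assume "t \<ge> 0"
      have gen: "(1 / s)^2 * (- s - C * s^2) + 1 / s + C = 0" if "s \<noteq> 0" for s :: real
      proof -
        have "(1 / s)^2 * (- s - C * s^2) = - (1 / s) - C"
          using that by (simp add: power2_eq_square field_simps)
        thus ?thesis by simp
      qed
      show "(1 / (t + 1))^2 * (- (t + 1) - C * (t + 1)^2) + 1 / (t + 1) + C = 0"
        by (rule gen) (use \<open>t \<ge> 0\<close> in simp)
    qed
    show "((\<lambda>t::real. 1 / (t + 1)) \<longlongrightarrow> 0) at_top" by (rule lim_inv)
    show "\<forall>\<^sub>F t in at_top. t \<le> \<bar>A2 * fst (phi (1 / (t + 1)) (- (t + 1) - C * (t + 1)^2)) +
        B2 * snd (phi (1 / (t + 1)) (- (t + 1) - C * (t + 1)^2)) + C2\<bar>"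
      unfolding L2phi
    proof (cases "C \<ge> 0")
      case True
      have "\<forall>\<^sub>F t in at_top. (0::real) \<le> t" by (rule eventually_ge_at_top)
      thus "\<forall>\<^sub>F t in at_top. t \<le> \<bar>- (t + 1) - C * (t + 1)^2\<bar>"
      proof eventually_elim
        case (elim t)
        have "0 \<le> C * (t + 1)^2" using True by simp
        thus ?case by linarith
      qed
    next
      case False
      have "\<forall>\<^sub>F t in at_top. 2 / (- C) \<le> t" by (rule eventually_ge_at_top)
      thus "\<forall>\<^sub>F t in at_top. t \<le> \<bar>- (t + 1) - C * (t + 1)^2\<bar>"
      proof eventually_elim
        case (elim t)
        have t0: "t \<ge> 0" using elim False by (smt (verit) divide_nonneg_pos)
        have "2 \<le> (-C) * t" using elim False by (simp add: field_simps)
        hence "1 \<le> (-C) * (t + 1) - 1" using False by (simp add: algebra_simps)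
        hence "(t + 1) * 1 \<le> (t + 1) * ((-C) * (t + 1) - 1)" using t0 by (intro mult_left_mono) auto
        hence "t + 1 \<le> - (t + 1) - C * (t + 1)^2" by (simp add: algebra_simps power2_eq_square)
        thus ?case by linarith
      qed
    qed
  qed (use assms L1phi in auto)
  have as2: "asymptotic_to (zero_set f) (line A2 B2 C2)"
  proof (rule asym_gen[where \<gamma> = "\<lambda>t. phi (t + 1) (- ((t + 1) + C) / (t + 1)^2)"
        and W = "\<lambda>t. - ((t + 1) + C) / (t + 1)^2" and A' = A1 and B' = B1 and C0' = C1])
    show "continuous_on {0..} (\<lambda>t. phi (t + 1) (- ((t + 1) + C) / (t + 1)^2))"
      by (intro contphi continuous_intros) auto
    show "\<forall>t\<ge>0. phi (t + 1) (- ((t + 1) + C) / (t + 1)^2) \<in> zero_set f"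
    proof (intro allI impI zs)
      fix t :: real assume "t \<ge> 0"
      hence "t + 1 \<noteq> 0" by simp
      thus "(t + 1)^2 * (- ((t + 1) + C) / (t + 1)^2) + (t + 1) + C = 0"
        by (simp add: field_simps)
    qed
    show "((\<lambda>t::real. - ((t + 1) + C) / (t + 1)^2) \<longlongrightarrow> 0) at_top"
    proof -
      have e: "(\<lambda>t. - ((t + 1) + C) / (t + 1)^2) = (\<lambda>t::real. - (1 / (t + 1)) - C * (1 / (t + 1))^2)"
      proof
        fix t :: real
        have gen: "- (s + C) / s^2 = - (1 / s) - C * (1 / s)^2" for s :: real
          by (cases "s = 0") (simp_all add: field_simps power2_eq_square)
        show "- ((t + 1) + C) / (t + 1)^2 = - (1 / (t + 1)) - C * (1 / (t + 1))^2"
          by (rule gen)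
      qed
      have "((\<lambda>t::real. - (1 / (t + 1)) - C * (1 / (t + 1))^2) \<longlongrightarrow> - 0 - C * 0^2) at_top"
        by (intro tendsto_intros lim_inv)
      thus ?thesis unfolding e by simp
    qed
    show "\<forall>\<^sub>F t in at_top. t \<le> \<bar>A1 * fst (phi (t + 1) (- ((t + 1) + C) / (t + 1)^2)) +
        B1 * snd (phi (t + 1) (- ((t + 1) + C) / (t + 1)^2)) + C1\<bar>"
      unfolding L1phi using eventually_ge_at_top[of "0::real"] by eventually_elim auto
  qed (use assms L2phi in auto)
  have irr: "irreducible f" if C: "C \<noteq> 0"
  proof -
    define g :: "real poly poly" where "g = [:[:C,1:], [:0,0,1:]:]"
    have evg: "eval2 g u v = u^2 * v + u + C" for u v
      unfolding g_def by (simp add: eval2_alt algebra_simps power2_eq_square)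
    have girr: "irreducible g" unfolding g_def by (rule g_irred[OF C])
    have rP: "repr (\<lambda>u v. fst (phi u v))"
    proof -
      have eqr: "(\<lambda>u v. fst (phi u v)) = (\<lambda>u v. (B2 / D) * u + (- B1 / D) * v + ((C2 * B1 - C1 * B2) / D))"
      proof (intro ext)
        fix u v
        have "(B2 / D) * u + (- B1 / D) * v + ((C2 * B1 - C1 * B2) / D) = (B2 * u + (- B1) * v + (C2 * B1 - C1 * B2)) / D"
          by (simp add: add_divide_distrib diff_divide_distrib)
        also have "B2 * u + (- B1) * v + (C2 * B1 - C1 * B2) = (u - C1) * B2 - (v - C2) * B1"
          by (simp add: algebra_simps)
        finally show "fst (phi u v) = (B2 / D) * u + (- B1 / D) * v + ((C2 * B1 - C1 * B2) / D)"
          by (simp add: phi_def)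
      qed
      show ?thesis unfolding eqr by (rule repr_lin)
    qed
    have rQ: "repr (\<lambda>u v. snd (phi u v))"
    proof -
      have eqr: "(\<lambda>u v. snd (phi u v)) = (\<lambda>u v. (- A2 / D) * u + (A1 / D) * v + ((A2 * C1 - A1 * C2) / D))"
      proof (intro ext)
        fix u v
        have "(- A2 / D) * u + (A1 / D) * v + ((A2 * C1 - A1 * C2) / D) = ((- A2) * u + A1 * v + (A2 * C1 - A1 * C2)) / D"
          by (simp add: add_divide_distrib diff_divide_distrib)
        also have "(- A2) * u + A1 * v + (A2 * C1 - A1 * C2) = A1 * (v - C2) - A2 * (u - C1)"
          by (simp add: algebra_simps)
        finally show "snd (phi u v) = (- A2 / D) * u + (A1 / D) * v + ((A2 * C1 - A1 * C2) / D)"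
          by (simp add: phi_def)
      qed
      show ?thesis unfolding eqr by (rule repr_lin)
    qed
    have tr: "\<exists>a'. \<forall>u v. eval2 a' u v = eval2 a (fst (phi u v)) (snd (phi u v))" for a
      using repr_comp[OF rP rQ, of a] unfolding repr_def by blast
    have bk: "\<forall>x y. eval2 a x y = eval2 a' (A1 * x + B1 * y + C1) (A2 * x + B2 * y + C2)"
      if "\<forall>u v. eval2 a' u v = eval2 a (fst (phi u v)) (snd (phi u v))" for a a'
    proof (intro allI)
      fix x y
      have "eval2 a' (A1 * x + B1 * y + C1) (A2 * x + B2 * y + C2) = eval2 a (fst (phi (A1 * x + B1 * y + C1) (A2 * x + B2 * y + C2))) (snd (phi (A1 * x + B1 * y + C1) (A2 * x + B2 * y + C2)))"
        by (rule that[rule_format])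
      also have "\<dots> = eval2 a x y" unfolding phiL by simp
      finally show "eval2 a x y = eval2 a' (A1 * x + B1 * y + C1) (A2 * x + B2 * y + C2)" by simp
    qed
    have unit_of: "is_unit a" if "is_unit a'" "\<forall>u v. eval2 a' u v = eval2 a (fst (phi u v)) (snd (phi u v))" for a a'
    proof -
      have "\<exists>r. r \<noteq> 0 \<and> a' = [:[:r:]:]" using that(1) by (simp only: unit_pp)
      then obtain r where r: "r \<noteq> 0" "a' = [:[:r:]:]" by blast
      have "a = [:[:r:]:]"
      proof (rule eval2_inj)
        fix x y
        have "eval2 a x y = eval2 a' (A1 * x + B1 * y + C1) (A2 * x + B2 * y + C2)"
          using bk[OF that(2)] by blast
        also have "\<dots> = r" unfolding r(2) by simp
        finally show "eval2 a x y = eval2 [:[:r:]:] x y" by simp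
      qed
      hence "\<exists>r. r \<noteq> 0 \<and> a = [:[:r:]:]" using r(1) by blast
      thus ?thesis by (simp only: unit_pp)
    qed
    show ?thesis
    proof (rule irreducibleI)
      have e1: "eval2 f (fst (phi 1 0)) (snd (phi 1 0)) = 1 + C" using evfphi[of 1 0] by simp
      have e0: "eval2 f (fst (phi 0 0)) (snd (phi 0 0)) = C" using evfphi[of 0 0] by simp
      show "f \<noteq> 0"
      proof
        assume "f = 0"
        hence "eval2 f x y = 0" for x y by (simp add: eval2_def)
        thus False using e1 e0 by simp
      qed
      show "\<not> is_unit f"
      proof
        assume "is_unit f"
        then obtain r where "f = [:[:r:]:]" unfolding unit_pp by blast
        hence "eval2 f x y = r" for x y by simp
        thus False using e1 e0 by simp
      qed
      fix a b assume fab: "f = a * b"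
      obtain a' where a': "\<forall>u v. eval2 a' u v = eval2 a (fst (phi u v)) (snd (phi u v))" using tr by blast
      obtain b' where b': "\<forall>u v. eval2 b' u v = eval2 b (fst (phi u v)) (snd (phi u v))" using tr by blast
      have "g = a' * b'"
      proof (rule eval2_inj)
        fix u v
        have "eval2 g u v = eval2 f (fst (phi u v)) (snd (phi u v))" by (simp add: evg evfphi)
        also have "\<dots> = eval2 a' u v * eval2 b' u v" by (simp add: fab a' b')
        finally show "eval2 g u v = eval2 (a' * b') u v" by simp
      qed
      hence "is_unit a' \<or> is_unit b'" by (rule irreducibleD[OF girr])
      thus "is_unit a \<or> is_unit b"
      proof
        assume "is_unit a'" thus ?thesis using unit_of[OF _ a'] by blast
      next
        assume "is_unit b'" thus ?thesis using unit_of[OF _ b'] by blast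
      qed
    qed
  qed
  show ?thesis using as1 as2 irr by blast
qed


end
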